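(* Let $\rho$ be a partial density operator on the state space of a finite set of qubits, and let $\sigma$ be a stabilizer state, i.e. a function assigning to each stabilizer variable $\mathcal{s}$ a value $\sigma(\mathcal{s}) = c\cdot s$ with $c \in \{1,-1,i,-i\}$ and $s$ a Pauli string. Let $s_{e0}, s_{e1}, s_{e2}$ be stabilizer expressions. Then: (1) If $(\rho,\sigma) \models s_{e0}$ and $(\rho,\sigma) \models s_{e1}$, then $(\rho,\sigma) \models s_{e0}s_{e1}$ and $(\rho,\sigma) \models \lambda_0 s_{e0} + \lambda_1 s_{e1}$ for all $\lambda_0,\lambda_1 \in \mathbb{C}$ with $\lambda_0 + \lambda_1 = 1$. (2) If $s_{e0}$ is nonsingular (invertible), $(\rho,\sigma) \models s_{e0}$ and $(\rho,\sigma) \models s_{e1}s_{e0}$, then $(\rho,\sigma) \models s_{e1}$. (3) If $a,b \in \mathbb{C}$ satisfy $(a s_{e0} + b s_{e1})\rho = \rho$, every $\sigma(\mathcal{s})$ commutes with both $s_{e0}$ and $s_{e1}$, and $(\rho,\sigma) \models s_{e2}$, then $(\rho,\sigma) \models a s_{e0} + b\, s_{e1}s_{e2}$.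
   Context: A Pauli string (also called a stabilizer) is a tensor product of the single-qubit operators $I,X,Y,Z$ acting on finitely many qubits (identity elsewhere). Stabilizer expressions are the operators generated from Pauli strings by complex linear combinations: $s_e ::= s \mid \lambda_0 s_{e0} + \lambda_1 s_{e1}$ with $\lambda_0,\lambda_1 \in \mathbb{C}$; products of stabilizer expressions are again regarded as such operators. For an operator $O$ of this kind, the program state $(\rho,\sigma)$ satisfies $O$, written $(\rho,\sigma) \models O$, iff $O\rho = \rho$ and $O$ commutes with $\sigma(\mathcal{s})$ for every stabilizer variable $\mathcal{s}$ in the domain of $\sigma$. *)

theory Defs
  imports "Jordan_Normal_Form.Matrix"
begin

definition kron :: "complex mat \<Rightarrow> complex mat \<Rightarrow> complex mat" where
  "kron A B = mat (dim_row A * dim_row B) (dim_col A * dim_col B)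
     (\<lambda>(i, j). A $$ (i div dim_row B, j div dim_col B) * B $$ (i mod dim_row B, j mod dim_col B))"

datatype pauli = PI | PX | PY | PZ

definition pauli_mat :: "pauli \<Rightarrow> complex mat" where
  "pauli_mat p = (case p of
      PI \<Rightarrow> mat_of_rows_list 2 [[1, 0], [0, 1]]
    | PX \<Rightarrow> mat_of_rows_list 2 [[0, 1], [1, 0]]
    | PY \<Rightarrow> mat_of_rows_list 2 [[0, - \<i>], [\<i>, 0]]
    | PZ \<Rightarrow> mat_of_rows_list 2 [[1, 0], [0, -1]])"

text \<open>Pauli string on the n qubits: tensor product of single-qubit Paulis
  (identity factors represent qubits not acted upon).\<close>
definition pauli_string :: "pauli list \<Rightarrow> complex mat" where
  "pauli_string ps = foldr (\<lambda>p M. kron (pauli_mat p) M) ps (1\<^sub>m 1)"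

definition is_pauli_string :: "nat \<Rightarrow> complex mat \<Rightarrow> bool" where
  "is_pauli_string n M \<longleftrightarrow> (\<exists>ps. length ps = n \<and> M = pauli_string ps)"

inductive_set stab_expr :: "nat \<Rightarrow> complex mat set" for n where
  base: "is_pauli_string n s \<Longrightarrow> s \<in> stab_expr n"
| lin: "s0 \<in> stab_expr n \<Longrightarrow> s1 \<in> stab_expr n \<Longrightarrow>
        (l0 \<cdot>\<^sub>m s0 + l1 \<cdot>\<^sub>m s1) \<in> stab_expr n"

definition mat_trace :: "complex mat \<Rightarrow> complex" where
  "mat_trace A = (\<Sum>i<dim_row A. A $$ (i, i))"

definition positive_op :: "nat \<Rightarrow> complex mat \<Rightarrow> bool" where
  "positive_op d A \<longleftrightarrow> A \<in> carrier_mat d d \<and>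
     (\<forall>v \<in> carrier_vec d. conjugate v \<bullet> (A *\<^sub>v v) \<in> \<real> \<and> 0 \<le> Re (conjugate v \<bullet> (A *\<^sub>v v)))"

definition partial_density_op :: "nat \<Rightarrow> complex mat \<Rightarrow> bool" where
  "partial_density_op n \<rho> \<longleftrightarrow> positive_op (2 ^ n) \<rho> \<and> Re (mat_trace \<rho>) \<le> 1"

definition stabilizer_state :: "nat \<Rightarrow> ('v \<Rightarrow> complex mat option) \<Rightarrow> bool" where
  "stabilizer_state n \<sigma> \<longleftrightarrow> (\<forall>x M. \<sigma> x = Some M \<longrightarrow>
     (\<exists>c s. c \<in> {1, -1, \<i>, -\<i>} \<and> is_pauli_string n s \<and> M = c \<cdot>\<^sub>m s))"

definition sat :: "complex mat \<Rightarrow> ('v \<Rightarrow> complex mat option) \<Rightarrow> complex mat \<Rightarrow> bool" where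
  "sat \<rho> \<sigma> Op \<longleftrightarrow> Op * \<rho> = \<rho> \<and> (\<forall>x M. \<sigma> x = Some M \<longrightarrow> Op * M = M * Op)"

end

theory Submission
  imports Defs
begin

lemma kron_carrier: "A \<in> carrier_mat a b \<Longrightarrow> B \<in> carrier_mat c d \<Longrightarrow> kron A B \<in> carrier_mat (a*c) (b*d)"
  by (simp add: kron_def)
lemma mrl: "length rs = r \<Longrightarrow> mat_of_rows_list nc rs \<in> carrier_mat r nc"
  unfolding mat_of_rows_list_def by (metis mat_carrier)
lemma pauli_mat_carrier: "pauli_mat p \<in> carrier_mat 2 2"
  unfolding pauli_mat_def by (cases p) (simp_all only: pauli.case, (rule mrl, simp)+)
lemma pauli_string_carrier: "pauli_string ps \<in> carrier_mat (2^length ps) (2^length ps)"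
  by (induction ps) (auto simp: pauli_string_def intro!: kron_carrier[OF pauli_mat_carrier, simplified])
lemma stab_carrier: "s \<in> stab_expr n \<Longrightarrow> s \<in> carrier_mat (2^n) (2^n)"
  by (induction rule: stab_expr.induct) (auto simp: is_pauli_string_def pauli_string_carrier)

lemma sigma_carrier: "stabilizer_state n \<sigma> \<Longrightarrow> \<sigma> x = Some M \<Longrightarrow> M \<in> carrier_mat (2^n) (2^n)"
  unfolding stabilizer_state_def is_pauli_string_def
  by (metis pauli_string_carrier smult_carrier_mat)

lemma one_smult_mat': "(1::complex) \<cdot>\<^sub>m R = R"
  by (rule eq_matI) auto

lemma lin_mult:
  fixes A B R M :: "complex mat"
  assumes "A \<in> carrier_mat d d" "B \<in> carrier_mat d d" "R \<in> carrier_mat d d"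
  shows "(a \<cdot>\<^sub>m A + b \<cdot>\<^sub>m B) * R = a \<cdot>\<^sub>m (A * R) + b \<cdot>\<^sub>m (B * R)"
proof -
  have "(a \<cdot>\<^sub>m A + b \<cdot>\<^sub>m B) * R = (a \<cdot>\<^sub>m A) * R + (b \<cdot>\<^sub>m B) * R"
    by (rule add_mult_distrib_mat[of _ d d]) (use assms in auto)
  also have "\<dots> = a \<cdot>\<^sub>m (A * R) + b \<cdot>\<^sub>m (B * R)"
    using mult_smult_assoc_mat[OF assms(1,3)] mult_smult_assoc_mat[OF assms(2,3)] by simp
  finally show ?thesis .
qed

lemma mult_lin:
  fixes A B R M :: "complex mat"
  assumes "A \<in> carrier_mat d d" "B \<in> carrier_mat d d" "R \<in> carrier_mat d d"
  shows "R * (a \<cdot>\<^sub>m A + b \<cdot>\<^sub>m B) = a \<cdot>\<^sub>m (R * A) + b \<cdot>\<^sub>m (R * B)"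
proof -
  have "R * (a \<cdot>\<^sub>m A + b \<cdot>\<^sub>m B) = R * (a \<cdot>\<^sub>m A) + R * (b \<cdot>\<^sub>m B)"
    by (rule mult_add_distrib_mat[of _ d d]) (use assms in auto)
  also have "\<dots> = a \<cdot>\<^sub>m (R * A) + b \<cdot>\<^sub>m (R * B)"
    using mult_smult_distrib[OF assms(3,1)] mult_smult_distrib[OF assms(3,2)] by simp
  finally show ?thesis .
qed

lemma lin_comm:
  fixes A B R M :: "complex mat"
  assumes "A \<in> carrier_mat d d" "B \<in> carrier_mat d d" "M \<in> carrier_mat d d"
    "A * M = M * A" "B * M = M * B"
  shows "(a \<cdot>\<^sub>m A + b \<cdot>\<^sub>m B) * M = M * (a \<cdot>\<^sub>m A + b \<cdot>\<^sub>m B)"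
  using lin_mult[OF assms(1-3)] mult_lin[OF assms(1-3)] assms(4,5) by simp

lemma main:
  fixes se0 se1 se2 R :: "complex mat"
  assumes R: "R \<in> carrier_mat d d"
    and sig: "\<And>x M. \<sigma> x = Some M \<Longrightarrow> M \<in> carrier_mat d d"
    and c0: "se0 \<in> carrier_mat d d" and c1: "se1 \<in> carrier_mat d d" and c2: "se2 \<in> carrier_mat d d"
  shows "(sat R \<sigma> se0 \<and> sat R \<sigma> se1 \<longrightarrow>
            sat R \<sigma> (se0 * se1) \<and>
            (\<forall>l0 l1 :: complex. l0 + l1 = 1 \<longrightarrow> sat R \<sigma> (l0 \<cdot>\<^sub>m se0 + l1 \<cdot>\<^sub>m se1)))
    \<and> (invertible_mat se0 \<and> sat R \<sigma> se0 \<and> sat R \<sigma> (se1 * se0) \<longrightarrow> sat R \<sigma> se1)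
    \<and> (\<forall>a b :: complex.
          (a \<cdot>\<^sub>m se0 + b \<cdot>\<^sub>m se1) * R = R
          \<and> (\<forall>x M. \<sigma> x = Some M \<longrightarrow> se0 * M = M * se0 \<and> se1 * M = M * se1)
          \<and> sat R \<sigma> se2
          \<longrightarrow> sat R \<sigma> (a \<cdot>\<^sub>m se0 + b \<cdot>\<^sub>m (se1 * se2)))"
proof (intro conjI impI allI)
  assume h: "sat R \<sigma> se0 \<and> sat R \<sigma> se1"
  show "sat R \<sigma> (se0 * se1)"
    unfolding sat_def
  proof (intro conjI allI impI)
    show "se0 * se1 * R = R" using h c0 c1 R unfolding sat_def
      by (metis assoc_mult_mat)
    fix x M assume "\<sigma> x = Some M"
    hence M: "M \<in> carrier_mat d d" and a: "se0 * M = M * se0" "se1 * M = M * se1"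
      using sig h unfolding sat_def by auto
    have "se0 * se1 * M = se0 * (M * se1)" using c0 c1 M a by (metis assoc_mult_mat)
    also have "\<dots> = M * se0 * se1" using c0 c1 M a by (metis assoc_mult_mat)
    also have "\<dots> = M * (se0 * se1)" using c0 c1 M by (metis assoc_mult_mat)
    finally show "se0 * se1 * M = M * (se0 * se1)" .
  qed
  fix l0 l1 :: complex assume l: "l0 + l1 = 1"
  show "sat R \<sigma> (l0 \<cdot>\<^sub>m se0 + l1 \<cdot>\<^sub>m se1)"
    unfolding sat_def
  proof (intro conjI allI impI)
    have "(l0 \<cdot>\<^sub>m se0 + l1 \<cdot>\<^sub>m se1) * R = l0 \<cdot>\<^sub>m (se0 * R) + l1 \<cdot>\<^sub>m (se1 * R)"
      using c0 c1 R by (rule lin_mult)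
    also have "\<dots> = (l0 + l1) \<cdot>\<^sub>m R" using h R unfolding sat_def by (simp add: add_smult_distrib_right_mat[symmetric])
    finally show "(l0 \<cdot>\<^sub>m se0 + l1 \<cdot>\<^sub>m se1) * R = R" using l by (simp add: one_smult_mat')
    fix x M assume "\<sigma> x = Some M"
    hence M: "M \<in> carrier_mat d d" and a: "se0 * M = M * se0" "se1 * M = M * se1"
      using sig h unfolding sat_def by auto
    show "(l0 \<cdot>\<^sub>m se0 + l1 \<cdot>\<^sub>m se1) * M = M * (l0 \<cdot>\<^sub>m se0 + l1 \<cdot>\<^sub>m se1)"
      using c0 c1 M a by (rule lin_comm)
  qed
next
  assume h: "invertible_mat se0 \<and> sat R \<sigma> se0 \<and> sat R \<sigma> (se1 * se0)"
  then obtain B where B: "se0 * B = 1\<^sub>m d" "B * se0 = 1\<^sub>m (dim_row B)"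
    using c0 unfolding invertible_mat_def inverts_mat_def by auto
  have Bc: "B \<in> carrier_mat d d"
    by (metis B c0 carrier_matD index_mult_mat(2,3) index_one_mat(2,3) carrier_matI)
  show "sat R \<sigma> se1"
    unfolding sat_def
  proof (intro conjI allI impI)
    have "se1 * R = se1 * (se0 * R)" using h unfolding sat_def by simp
    also have "\<dots> = se1 * se0 * R" using c0 c1 R by (metis assoc_mult_mat)
    also have "\<dots> = R" using h unfolding sat_def by simp
    finally show "se1 * R = R" .
    fix x M assume "\<sigma> x = Some M"
    hence M: "M \<in> carrier_mat d d" and a: "se0 * M = M * se0" "se1 * se0 * M = M * (se1 * se0)"
      using sig h unfolding sat_def by auto
    have "se1 * M = se1 * M * (se0 * B)" using B c1 M by simp
    also have "\<dots> = se1 * M * se0 * B"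
      by (rule assoc_mult_mat[symmetric, of _ d d _ d _ d]) (use Bc c0 c1 M in auto)
    also have "se1 * M * se0 = se1 * (M * se0)"
      by (rule assoc_mult_mat[of _ d d _ d _ d]) (use c0 c1 M in auto)
    also have "\<dots> = se1 * (se0 * M)" using a by simp
    also have "\<dots> = se1 * se0 * M"
      by (rule assoc_mult_mat[symmetric, of _ d d _ d _ d]) (use c0 c1 M in auto)
    also have "\<dots> = M * (se1 * se0)" using a by simp
    also have "\<dots> = M * se1 * se0"
      by (rule assoc_mult_mat[symmetric, of _ d d _ d _ d]) (use c0 c1 M in auto)
    also have "M * se1 * se0 * B = M * se1 * (se0 * B)"
      by (rule assoc_mult_mat[of _ d d _ d _ d]) (use Bc c0 c1 M in auto)
    also have "\<dots> = M * se1" using B c1 M by simp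
    finally show "se1 * M = M * se1" .
  qed
next
  fix a b :: complex
  assume h: "(a \<cdot>\<^sub>m se0 + b \<cdot>\<^sub>m se1) * R = R
          \<and> (\<forall>x M. \<sigma> x = Some M \<longrightarrow> se0 * M = M * se0 \<and> se1 * M = M * se1)
          \<and> sat R \<sigma> se2"
  show "sat R \<sigma> (a \<cdot>\<^sub>m se0 + b \<cdot>\<^sub>m (se1 * se2))"
    unfolding sat_def
  proof (intro conjI allI impI)
    have "(a \<cdot>\<^sub>m se0 + b \<cdot>\<^sub>m (se1 * se2)) * R = a \<cdot>\<^sub>m (se0 * R) + b \<cdot>\<^sub>m (se1 * se2 * R)"
      using c0 c1 c2 R by (intro lin_mult) auto
    also have "se1 * se2 * R = se1 * R" using h c1 c2 R unfolding sat_def by (metis assoc_mult_mat)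
    also have "a \<cdot>\<^sub>m (se0 * R) + b \<cdot>\<^sub>m (se1 * R) = (a \<cdot>\<^sub>m se0 + b \<cdot>\<^sub>m se1) * R"
      using c0 c1 R by (rule lin_mult[symmetric])
    finally show "(a \<cdot>\<^sub>m se0 + b \<cdot>\<^sub>m (se1 * se2)) * R = R" using h by simp
    fix x M assume "\<sigma> x = Some M"
    hence M: "M \<in> carrier_mat d d" and a: "se0 * M = M * se0" "se1 * M = M * se1" "se2 * M = M * se2"
      using sig h unfolding sat_def by auto
    have e: "se1 * se2 * M = M * (se1 * se2)"
    proof -
      have "se1 * se2 * M = se1 * (M * se2)" using c1 c2 M a by (metis assoc_mult_mat)
      also have "\<dots> = M * se1 * se2" using c1 c2 M a by (metis assoc_mult_mat)
      also have "\<dots> = M * (se1 * se2)" using c1 c2 M by (metis assoc_mult_mat)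
      finally show ?thesis .
    qed
    show "(a \<cdot>\<^sub>m se0 + b \<cdot>\<^sub>m (se1 * se2)) * M = M * (a \<cdot>\<^sub>m se0 + b \<cdot>\<^sub>m (se1 * se2))"
      using c0 c1 c2 M a e by (intro lin_comm) auto
  qed
qed

theorem lemma2:
  fixes n :: nat and \<rho> :: "complex mat" and \<sigma> :: "'v \<Rightarrow> complex mat option"
    and se0 se1 se2 :: "complex mat"
  assumes "partial_density_op n \<rho>"
    and "stabilizer_state n \<sigma>"
    and "se0 \<in> stab_expr n" and "se1 \<in> stab_expr n" and "se2 \<in> stab_expr n"
  shows "(sat \<rho> \<sigma> se0 \<and> sat \<rho> \<sigma> se1 \<longrightarrow>
            sat \<rho> \<sigma> (se0 * se1) \<and>
            (\<forall>l0 l1 :: complex. l0 + l1 = 1 \<longrightarrow> sat \<rho> \<sigma> (l0 \<cdot>\<^sub>m se0 + l1 \<cdot>\<^sub>m se1)))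
    \<and> (invertible_mat se0 \<and> sat \<rho> \<sigma> se0 \<and> sat \<rho> \<sigma> (se1 * se0) \<longrightarrow> sat \<rho> \<sigma> se1)
    \<and> (\<forall>a b :: complex.
          (a \<cdot>\<^sub>m se0 + b \<cdot>\<^sub>m se1) * \<rho> = \<rho>
          \<and> (\<forall>x M. \<sigma> x = Some M \<longrightarrow> se0 * M = M * se0 \<and> se1 * M = M * se1)
          \<and> sat \<rho> \<sigma> se2
          \<longrightarrow> sat \<rho> \<sigma> (a \<cdot>\<^sub>m se0 + b \<cdot>\<^sub>m (se1 * se2)))"
  apply (rule main[where d="2^n"])
  using assms by (auto simp: partial_density_op_def positive_op_def intro: stab_carrier sigma_carrier)

end
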